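(* Let $G$ be a group acting transitively on a set $X$. Then $\mathrm{Con}(G\curvearrowright X)\subseteq\mathrm{Con}(G)$.
   Context: For an action $G\curvearrowright X$, an ordered tuple $\mathfrak{g}=(g_1,\dots,g_n)$ of elements of $G$ and a finite partition $\mathcal{E}=\{E_1,\dots,E_m\}$ of $X$ (a configuration pair), a configuration is a tuple $C=(C_0,\dots,C_n)\in\{1,\dots,m\}^{n+1}$ such that some $x\in E_{C_0}$ satisfies $g_i\cdot x\in E_{C_i}$ for $i=1,\dots,n$; the set of these is $\mathrm{Con}(\mathfrak{g},\mathcal{E};X)$. Then $\mathrm{Con}(G\curvearrowright X)=\{\mathrm{Con}(\mathfrak{g},\mathcal{E};X): (\mathfrak{g},\mathcal{E})\text{ a configuration pair}\}$. $\mathrm{Con}(G)$ denotes $\mathrm{Con}(G\curvearrowright G)$ for the action of $G$ on itself by left multiplication. *)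

theory Defs
  imports "HOL-Algebra.Group_Action"
begin

definition is_partition :: "'x set \<Rightarrow> nat \<Rightarrow> (nat \<Rightarrow> 'x set) \<Rightarrow> bool" where
  "is_partition X m E \<longleftrightarrow>
     (\<forall>i\<in>{1..m}. E i \<noteq> {} \<and> E i \<subseteq> X) \<and>
     (\<forall>i\<in>{1..m}. \<forall>j\<in>{1..m}. i \<noteq> j \<longrightarrow> E i \<inter> E j = {}) \<and>
     (\<Union>i\<in>{1..m}. E i) = X"

text \<open>\<open>Con(g, E; X)\<close> for the action \<open>act\<close>: tuples \<open>(C_0,...,C_n)\<close> (lists of length
  \<open>n+1\<close>, \<open>n = length gs\<close>) with entries in \<open>{1..m}\<close>, such that some \<open>x \<in> E_{C_0}\<close>
  has \<open>g_i \<cdot> x \<in> E_{C_i}\<close> for \<open>i = 1..n\<close> (with \<open>g_i = gs ! (i-1)\<close>).\<close>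
definition Con_pair :: "('g \<Rightarrow> 'x \<Rightarrow> 'x) \<Rightarrow> 'g list \<Rightarrow> nat \<Rightarrow> (nat \<Rightarrow> 'x set) \<Rightarrow> nat list set" where
  "Con_pair act gs m E =
     {C. length C = length gs + 1 \<and> set C \<subseteq> {1..m} \<and>
         (\<exists>x \<in> E (C ! 0). \<forall>i\<in>{1..length gs}. act (gs ! (i - 1)) x \<in> E (C ! i))}"

definition Con_action :: "('g, 'b) monoid_scheme \<Rightarrow> 'x set \<Rightarrow> ('g \<Rightarrow> 'x \<Rightarrow> 'x) \<Rightarrow> nat list set set" where
  "Con_action G X act =
     {Con_pair act gs m E | gs m E. set gs \<subseteq> carrier G \<and> is_partition X m E}"

definition Con_group :: "('g, 'b) monoid_scheme \<Rightarrow> nat list set set" where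
  "Con_group G = Con_action G (carrier G) (\<lambda>g x. g \<otimes>\<^bsub>G\<^esub> x)"

end

theory Submission
  imports Defs
begin

theorem mainTheorem5:
  fixes G (structure) and X :: "'x set" and \<phi> :: "'g \<Rightarrow> 'x \<Rightarrow> 'x"
  assumes "transitive_action G X \<phi>" and "X \<noteq> {}"
  shows "Con_action G X \<phi> \<subseteq> Con_group G"
proof
  interpret T: transitive_action G X \<phi> by (rule assms(1))
  interpret group G using T.group_hom group_hom.axioms(1) by auto
  obtain x0 where x0: "x0 \<in> X" using assms(2) by auto
  fix S assume "S \<in> Con_action G X \<phi>"
  then obtain gs m E where S: "S = Con_pair \<phi> gs m E" and gs: "set gs \<subseteq> carrier G"
    and P: "is_partition X m E" unfolding Con_action_def by auto
  define E' where "E' = (\<lambda>i. {h \<in> carrier G. \<phi> h x0 \<in> E i})"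
  have img: "\<And>h. h \<in> carrier G \<Longrightarrow> \<phi> h x0 \<in> X" using T.element_image x0 by blast
  have P': "is_partition (carrier G) m E'"
    unfolding is_partition_def
  proof (intro conjI ballI impI)
    fix i assume i: "i \<in> {1..m}"
    then obtain y where "y \<in> E i" using P unfolding is_partition_def by blast
    moreover have "y \<in> X" using P i \<open>y \<in> E i\<close> unfolding is_partition_def by blast
    ultimately obtain h where "h \<in> carrier G" "\<phi> h x0 \<in> E i"
      using T.unique_orbit[OF x0] by metis
    then show "E' i \<noteq> {}" unfolding E'_def by blast
    show "E' i \<subseteq> carrier G" unfolding E'_def by blast
  next
    fix i j assume "i \<in> {1..m}" "j \<in> {1..m}" "i \<noteq> j"
    then have "E i \<inter> E j = {}" using P unfolding is_partition_def by blast
    then show "E' i \<inter> E' j = {}" unfolding E'_def by blast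
  next
    show "(\<Union>i\<in>{1..m}. E' i) = carrier G"
    proof
      show "(\<Union>i\<in>{1..m}. E' i) \<subseteq> carrier G" unfolding E'_def by blast
      show "carrier G \<subseteq> (\<Union>i\<in>{1..m}. E' i)"
      proof
        fix h assume h: "h \<in> carrier G"
        then have "\<phi> h x0 \<in> (\<Union>i\<in>{1..m}. E i)" using img P unfolding is_partition_def by blast
        then show "h \<in> (\<Union>i\<in>{1..m}. E' i)" using h unfolding E'_def by blast
      qed
    qed
  qed
  have gi: "\<And>i. i \<in> {1..length gs} \<Longrightarrow> gs ! (i - 1) \<in> carrier G"
    using gs by (metis atLeastAtMost_iff diff_less less_le_trans nth_mem subsetD zero_less_one le_neq_implies_less
        Suc_le_eq not_le diff_Suc_less)
  have "Con_pair \<phi> gs m E = Con_pair (\<lambda>g x. g \<otimes> x) gs m E'"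
  proof -
  have key: "(\<exists>x\<in>E (C ! 0). \<forall>i\<in>{1..length gs}. \<phi> (gs ! (i - 1)) x \<in> E (C ! i)) =
          (\<exists>x\<in>E' (C ! 0). \<forall>i\<in>{1..length gs}. gs ! (i - 1) \<otimes> x \<in> E' (C ! i))"
    if C1: "length C = length gs + 1" and C2: "set C \<subseteq> {1..m}" for C
  proof -
    show "(\<exists>x\<in>E (C ! 0). \<forall>i\<in>{1..length gs}. \<phi> (gs ! (i - 1)) x \<in> E (C ! i)) =
          (\<exists>x\<in>E' (C ! 0). \<forall>i\<in>{1..length gs}. gs ! (i - 1) \<otimes> x \<in> E' (C ! i))"
    proof
      assume "\<exists>x\<in>E (C ! 0). \<forall>i\<in>{1..length gs}. \<phi> (gs ! (i - 1)) x \<in> E (C ! i)"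
      then obtain x where x: "x \<in> E (C ! 0)" and hx: "\<forall>i\<in>{1..length gs}. \<phi> (gs ! (i - 1)) x \<in> E (C ! i)"
        by blast
      have "x \<in> X"
      proof -
        have "C ! 0 \<in> {1..m}" using C1 C2 by (metis add_gr_0 nth_mem subsetD zero_less_one)
        then show ?thesis using x P unfolding is_partition_def by blast
      qed
      then obtain h where h: "h \<in> carrier G" "\<phi> h x0 = x" using T.unique_orbit[OF x0] by metis
      show "\<exists>x\<in>E' (C ! 0). \<forall>i\<in>{1..length gs}. gs ! (i - 1) \<otimes> x \<in> E' (C ! i)"
      proof (intro bexI ballI)
        show "h \<in> E' (C ! 0)" using h x unfolding E'_def by simp
        fix i assume i: "i \<in> {1..length gs}"
        show "gs ! (i - 1) \<otimes> h \<in> E' (C ! i)"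
          using hx i h gi[OF i] T.composition_rule[OF x0 gi[OF i] h(1)] unfolding E'_def by simp
      qed
    next
      assume "\<exists>x\<in>E' (C ! 0). \<forall>i\<in>{1..length gs}. gs ! (i - 1) \<otimes> x \<in> E' (C ! i)"
      then obtain h where h: "h \<in> E' (C ! 0)" and hx: "\<forall>i\<in>{1..length gs}. gs ! (i - 1) \<otimes> h \<in> E' (C ! i)"
        by blast
      show "\<exists>x\<in>E (C ! 0). \<forall>i\<in>{1..length gs}. \<phi> (gs ! (i - 1)) x \<in> E (C ! i)"
      proof (intro bexI ballI)
        show "\<phi> h x0 \<in> E (C ! 0)" using h unfolding E'_def by simp
        fix i assume i: "i \<in> {1..length gs}"
        show "\<phi> (gs ! (i - 1)) (\<phi> h x0) \<in> E (C ! i)"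
        proof -
          have "gs ! (i - 1) \<otimes> h \<in> E' (C ! i)" using hx i by blast
          then have "\<phi> (gs ! (i - 1) \<otimes> h) x0 \<in> E (C ! i)" unfolding E'_def by blast
          moreover have "h \<in> carrier G" using h unfolding E'_def by blast
          ultimately show ?thesis using T.composition_rule[OF x0 gi[OF i], of h] by simp
        qed
      qed
    qed
  qed
  show ?thesis unfolding Con_pair_def using key by blast
  qed
  then show "S \<in> Con_group G"
    unfolding Con_group_def Con_action_def using S gs P' by blast
qed

end
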